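(* Let $T, D, E$ be positive integers ($E$ may also be $0$) and let $k$ be a positive integer with $k \ge 2T \log(D)/\log(2T)$. Let $p_1 < p_2 < \cdots < p_{k+2E}$ be primes with $2T < p_1$, and for each $i$ let $\zeta_i \ne 1$ be a $p_i$-th root of unity in $\mathbb{C}$. Let $f \in \mathbb{Q}[x]$ have at most $T$ nonzero terms and $\deg f \le D$, and suppose we are given values $y_i = f(\zeta_i) + \epsilon_i$, $1 \le i \le k+2E$, where $\epsilon_i \in \mathbb{C}$ and at most $E$ of the $\epsilon_i$ are nonzero. If $g \in \mathbb{Q}[x]$ has at most $T$ nonzero terms, $\deg g \le D$, and $g(\zeta_i) = y_i$ for at least $k+E$ indices $i$, then $g = f$. *)

theory Defs
  imports Complex_Main "HOL-Computational_Algebra.Computational_Algebra"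
begin

definition nterms :: "'a::zero poly \<Rightarrow> nat" where
  "nterms f = card {i. coeff f i \<noteq> 0}"

definition cval :: "rat poly \<Rightarrow> complex \<Rightarrow> complex" where
  "cval f z = poly (map_poly of_rat f) z"

end

theory Submission
  imports Defs "Berlekamp_Zassenhaus.Factor_Bound"
begin

hide_const (open) up_ring.monom up_ring.coeff module.smult

definition cyc :: "nat \<Rightarrow> int poly" where "cyc p = (\<Sum>i<p. monom 1 i)"

lemma coeff_cyc: "coeff (cyc p) i = (if i < p then 1 else 0)"
  unfolding cyc_def by (simp add: coeff_sum coeff_monom)

lemma cyc_mult: "[:-1,1:] * cyc p = monom 1 p - 1"
proof (induction p)
  case 0 then show ?case by (simp add: cyc_def)
next
  case (Suc p)
  have e: "cyc (Suc p) = cyc p + monom 1 p" by (simp add: cyc_def)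
  have m: "[:-1,1:] * monom (1::int) p = monom 1 (Suc p) - monom 1 p"
    by (simp add: monom_Suc algebra_simps)
  have "[:-1,1:] * cyc (Suc p) = [:-1,1:] * cyc p + [:-1,1:] * monom 1 p"
    by (simp only: e distrib_left)
  also have "\<dots> = (monom 1 p - 1) + (monom 1 (Suc p) - monom 1 p)" by (simp only: Suc.IH m)
  also have "\<dots> = monom 1 (Suc p) - 1" by simp
  finally show ?case .
qed

lemma coeff_x1_pow: "coeff ([:1,1:] ^ n :: int poly) k = int (n choose k)"
proof (induction n arbitrary: k)
  case 0 then show ?case by (cases k) auto
next
  case (Suc n)
  have "([:1,1:] :: int poly) ^ Suc n = pCons 0 ([:1,1:] ^ n) + [:1,1:] ^ n"
    by (simp add: algebra_simps)
  then show ?case using Suc by (cases k) auto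
qed

lemma pcompose_monom1: "pcompose (monom 1 n) q = q ^ n"
  by (induction n) (auto simp: monom_Suc pcompose_pCons monom_0 pcompose_1)

definition psi :: "nat \<Rightarrow> int poly" where "psi p = pcompose (cyc p) [:1,1:]"

lemma coeff_psi: "coeff (psi p) k = int (p choose Suc k)"
proof -
  have "pcompose ([:-1,1:] * cyc p) [:1,1:] = pcompose (monom 1 p - 1) [:1,1:]"
    by (simp only: cyc_mult)
  then have "monom 1 1 * psi p = [:1,1:]^p - 1"
    by (simp add: pcompose_mult psi_def pcompose_diff pcompose_monom1 monom_Suc pcompose_pCons pcompose_1)
  then have "coeff (monom 1 1 * psi p) (Suc k) = coeff ([:1,1:]^p - 1) (Suc k)" by simp
  then show ?thesis using coeff_x1_pow[of p "Suc k"] by (simp add: coeff_monom_mult)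
qed

lemma eisenstein_core:
  fixes G H P :: "int poly" and q :: int
  assumes pr: "prime q" and GH: "G * H = P"
    and c0: "coeff P 0 = q" and low: "\<forall>k < degree P. q dvd coeff P k"
    and lc: "\<not> q dvd lead_coeff P"
    and g0: "q dvd coeff G 0" and dH: "degree H > 0"
  shows False
proof -
  have P0: "P \<noteq> 0" using lc by auto
  then have G0: "G \<noteq> 0" "H \<noteq> 0" using GH by auto
  have h0: "\<not> q dvd coeff H 0"
  proof
    assume "q dvd coeff H 0"
    with g0 have "q*q dvd coeff G 0 * coeff H 0" by (rule mult_dvd_mono)
    also have "coeff G 0 * coeff H 0 = q" using c0 unfolding GH[symmetric] by (simp add: coeff_mult_0)
    finally have "q * q dvd q * 1" by simp
    then have "q dvd 1" using pr by (subst (asm) dvd_mult_cancel_left) (auto simp: prime_elem_def)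
    then show False using pr not_prime_unit by blast
  qed
  have degs: "degree P = degree G + degree H" using GH degree_mult_eq G0 by metis
  have lcG: "\<not> q dvd lead_coeff G"
  proof
    assume "q dvd lead_coeff G"
    then have "q dvd lead_coeff G * lead_coeff H" by simp
    then show False using lc unfolding GH[symmetric] by (simp add: lead_coeff_mult)
  qed
  define m where "m = (LEAST m. \<not> q dvd coeff G m)"
  have m1: "\<not> q dvd coeff G m" unfolding m_def by (rule LeastI[of _ "degree G"]) (rule lcG)
  have m2: "m \<le> degree G" unfolding m_def by (rule Least_le) (rule lcG)
  have m3: "\<forall>i<m. q dvd coeff G i" unfolding m_def using not_less_Least by blast
  have mP: "m < degree P" using degs dH m2 by simp
  have "coeff P m = (\<Sum>i\<le>m. coeff G i * coeff H (m-i))" using GH coeff_mult by metis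
  also have "\<dots> = (\<Sum>i<m. coeff G i * coeff H (m-i)) + coeff G m * coeff H 0"
    by (simp add: lessThan_Suc_atMost[symmetric])
  finally have eq: "coeff G m * coeff H 0 = coeff P m - (\<Sum>i<m. coeff G i * coeff H (m-i))" by simp
  have "q dvd (\<Sum>i<m. coeff G i * coeff H (m-i))" using m3 by (intro dvd_sum) auto
  moreover have "q dvd coeff P m" using low mP by blast
  ultimately have "q dvd coeff G m * coeff H 0" unfolding eq by (rule dvd_diff[rotated])
  then show False using pr m1 h0 by (simp add: prime_dvd_mult_iff)
qed

lemma degree_cyc: "p > 0 \<Longrightarrow> degree (cyc p) = p - 1"
  by (rule antisym; (rule degree_le le_degree)?) (auto simp: coeff_cyc)

lemma psi_props:
  assumes "prime p"
  shows "degree (psi p) = p - 1" "coeff (psi p) 0 = int p" "lead_coeff (psi p) = 1"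
    "\<forall>k < degree (psi p). int p dvd coeff (psi p) k"
proof -
  have p0: "p > 0" using assms prime_gt_0_nat by blast
  show d: "degree (psi p) = p - 1" by (simp add: psi_def degree_pcompose degree_cyc p0)
  show "coeff (psi p) 0 = int p" by (simp add: coeff_psi)
  show "lead_coeff (psi p) = 1" using p0 by (simp add: d coeff_psi)
  show "\<forall>k < degree (psi p). int p dvd coeff (psi p) k"
  proof (intro allI impI)
    fix k assume "k < degree (psi p)"
    then have "Suc k < p" using d by simp
    then have "p dvd (p choose Suc k)" using assms by (intro dvd_choose_prime) auto
    then show "int p dvd coeff (psi p) k" by (simp add: coeff_psi)
  qed
qed

lemma cyc_irred:
  assumes pr: "prime p" and ab: "(a::rat poly) * b = map_poly of_int (cyc p)"
  shows "degree a = 0 \<or> degree b = 0"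
proof (rule ccontr)
  assume nz: "\<not> (degree a = 0 \<or> degree b = 0)"
  from rat_to_int_factor[OF ab[symmetric]] obtain g h where
    gh: "cyc p = g * h" "degree g = degree a" "degree h = degree b" by blast
  define G where "G = pcompose g [:1,1:]"
  define H where "H = pcompose h [:1,1:]"
  have GH: "G * H = psi p" by (simp add: G_def H_def psi_def gh pcompose_mult)
  have dG: "degree G > 0" "degree H > 0" using nz gh by (auto simp: G_def H_def degree_pcompose)
  note pp = psi_props[OF pr]
  have pri: "prime (int p)" using pr by (simp add: prime_nat_int_transfer)
  have lc: "\<not> int p dvd lead_coeff (psi p)" using pp(3) pri not_prime_unit by auto
  have "int p dvd coeff G 0 * coeff H 0" using pp(2) unfolding GH[symmetric] by (simp add: coeff_mult_0)
  then have "int p dvd coeff G 0 \<or> int p dvd coeff H 0" using pri by (simp add: prime_dvd_mult_iff)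
  then show False
  proof
    assume "int p dvd coeff G 0"
    then show False using eisenstein_core[OF pri GH pp(2) pp(4) lc] dG by blast
  next
    assume "int p dvd coeff H 0"
    moreover have "H * G = psi p" using GH by (simp add: mult.commute)
    ultimately show False using eisenstein_core[OF pri _ pp(2) pp(4) lc] dG by blast
  qed
qed

lemma cval_sum:
  assumes "degree r < n"
  shows "cval r z = (\<Sum>i<n. of_rat (coeff r i) * z ^ i)"
proof -
  have "cval r z = (\<Sum>i\<le>degree r. of_rat (coeff r i) * z ^ i)"
    unfolding cval_def by (simp add: poly_altdef coeff_map_poly degree_map_poly)
  also have "\<dots> = (\<Sum>i<n. of_rat (coeff r i) * z ^ i)"
    using assms by (intro sum.mono_neutral_left) (auto simp: coeff_eq_0)
  finally show ?thesis .
qed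

interpretation of_rat_cpoly: map_poly_comm_ring_hom "of_rat :: rat \<Rightarrow> complex" ..

lemma cval_add: "cval (a + b) z = cval a z + cval b z"
  and cval_mult: "cval (a * b) z = cval a z * cval b z"
  and cval_diff: "cval (a - b) z = cval a z - cval b z"
  by (simp_all add: cval_def of_rat_cpoly.hom_add of_rat_cpoly.hom_mult of_rat_cpoly.hom_minus)

lemma vanish_cyc:
  assumes pr: "prime p" and z1: "\<zeta> ^ p = 1" and z2: "\<zeta> \<noteq> 1"
    and dq: "degree q < p" and v: "cval q \<zeta> = 0"
  shows "\<forall>i<p. coeff q i = coeff q 0"
proof -
  define \<Phi> where "\<Phi> = (map_poly of_int (cyc p) :: rat poly)"
  have p0: "p > 0" using pr prime_gt_0_nat by blast
  have cP: "coeff \<Phi> i = (if i<p then 1 else 0)" for i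
    by (simp add: \<Phi>_def coeff_map_poly coeff_cyc)
  have dP: "degree \<Phi> = p - 1"
    by (rule antisym; (rule degree_le le_degree)?) (use p0 in \<open>auto simp: cP\<close>)
  have Pnz: "\<Phi> \<noteq> 0" using cP[of 0] p0 by auto
  have vP: "cval \<Phi> \<zeta> = 0"
  proof -
    have "cval \<Phi> \<zeta> = (\<Sum>i<p. of_rat (coeff \<Phi> i) * \<zeta> ^ i)"
      by (rule cval_sum) (use dP p0 in auto)
    also have "\<dots> = (\<Sum>i<p. \<zeta> ^ i)" by (simp add: cP)
    also have "\<dots> = 0" using z1 z2 by (simp add: sum_gp_strict)
    finally show ?thesis .
  qed
  define d where "d = gcd q \<Phi>"
  have "fst (bezout_coefficients q \<Phi>) * q + snd (bezout_coefficients q \<Phi>) * \<Phi> = d"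
    unfolding d_def by (rule bezout_coefficients_fst_snd)
  then have vd: "cval d \<zeta> = 0"
    by (metis cval_add cval_mult v vP mult_zero_right add_0)
  have "d dvd \<Phi>" unfolding d_def by simp
  then obtain e where de: "\<Phi> = d * e" by (elim dvdE)
  have dnz: "d \<noteq> 0" "e \<noteq> 0" using Pnz de by auto
  have "degree d = 0 \<or> degree e = 0"
    using cyc_irred[OF pr, of d e] de unfolding \<Phi>_def by simp
  then show ?thesis
  proof
    assume "degree d = 0"
    then have "cval d \<zeta> = of_rat (coeff d 0)" using cval_sum[of d 1] by simp
    with vd have "coeff d 0 = 0" by simp
    with \<open>degree d = 0\<close> have "d = 0" by (metis leading_coeff_0_iff)
    with dnz show ?thesis by simp
  next
    assume "degree e = 0"
    then obtain c where c: "e = [:c:]" using degree0_coeffs by blast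
    with dnz have c0: "c \<noteq> 0" by auto
    have "d = \<Phi> * [:inverse c:]" using de c c0 by (simp add: mult.assoc)
    then have "\<Phi> dvd d" by (auto intro: dvd_smult)
    also have "d dvd q" unfolding d_def by simp
    finally obtain r where qr: "q = \<Phi> * r" by (elim dvdE)
    show ?thesis
    proof (cases "r = 0")
      case True then show ?thesis using qr by simp
    next
      case False
      have "degree q = degree \<Phi> + degree r" using qr False Pnz degree_mult_eq by metis
      with dq dP p0 have "degree r = 0" by simp
      then obtain c' where "r = [:c':]" using degree0_coeffs by blast
      then have "q = smult c' \<Phi>" using qr by simp
      then show ?thesis using cP p0 by simp
    qed
  qed
qed

lemma pow_mod_root: "(\<zeta>::complex) ^ p = 1 \<Longrightarrow> \<zeta> ^ e = \<zeta> ^ (e mod p)"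
proof -
  assume z: "\<zeta> ^ p = 1"
  have "\<zeta> ^ e = \<zeta> ^ (p * (e div p) + e mod p)" by simp
  also have "\<dots> = (\<zeta> ^ p) ^ (e div p) * \<zeta> ^ (e mod p)" by (simp only: power_add power_mult)
  finally show ?thesis using z by simp
qed

lemma collision:
  assumes pr: "prime p" and z1: "\<zeta> ^ p = 1" and z2: "\<zeta> \<noteq> 1"
    and cd: "card {i. coeff h i \<noteq> 0} < p" and v: "cval h \<zeta> = 0" and e0: "coeff h e0 \<noteq> 0"
  shows "\<exists>e. coeff h e \<noteq> 0 \<and> e \<noteq> e0 \<and> e mod p = e0 mod p"
proof (rule ccontr)
  assume no: "\<not> (\<exists>e. coeff h e \<noteq> 0 \<and> e \<noteq> e0 \<and> e mod p = e0 mod p)"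
  define Sp where "Sp = {i. coeff h i \<noteq> 0}"
  have p0: "p > 0" using pr prime_gt_0_nat by blast
  have Sp_sub: "Sp \<subseteq> {..degree h}" unfolding Sp_def using le_degree by auto
  then have fin: "finite Sp" using finite_subset by blast
  define C where "C s = (\<Sum>e\<in>{e\<in>Sp. e mod p = s}. coeff h e)" for s
  define q where "q = (\<Sum>s<p. monom (C s) s)"
  have cq: "coeff q s = (if s < p then C s else 0)" for s
    by (simp add: q_def coeff_sum coeff_monom)
  have dq: "degree q < p"
  proof -
    have "degree q \<le> p - 1" by (rule degree_le) (auto simp: cq)
    then show ?thesis using p0 by simp
  qed
  have "cval q \<zeta> = (\<Sum>s<p. of_rat (C s) * \<zeta> ^ s)"
    using cval_sum[OF dq] by (simp add: cq)
  also have "\<dots> = (\<Sum>s<p. \<Sum>e\<in>{e\<in>Sp. e mod p = s}. of_rat (coeff h e) * \<zeta> ^ e)"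
  proof (intro sum.cong refl)
    fix s assume "s \<in> {..<p}"
    have "of_rat (C s) * \<zeta> ^ s = (\<Sum>e\<in>{e\<in>Sp. e mod p = s}. of_rat (coeff h e) * \<zeta> ^ s)"
      by (simp add: C_def of_rat_sum sum_distrib_right)
    also have "\<dots> = (\<Sum>e\<in>{e\<in>Sp. e mod p = s}. of_rat (coeff h e) * \<zeta> ^ e)"
      using pow_mod_root[OF z1] by (intro sum.cong refl) auto
    finally show "of_rat (C s) * \<zeta> ^ s = \<dots>" .
  qed
  also have "\<dots> = (\<Sum>e\<in>Sp. of_rat (coeff h e) * \<zeta> ^ e)"
    using fin p0 by (intro sum.group) auto
  also have "\<dots> = (\<Sum>i<Suc (degree h). of_rat (coeff h i) * \<zeta> ^ i)"
    using Sp_sub by (intro sum.mono_neutral_left) (auto simp: Sp_def)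
  also have "\<dots> = cval h \<zeta>" by (rule cval_sum[symmetric]) simp
  finally have vq: "cval q \<zeta> = 0" using v by simp
  have all: "\<forall>i<p. coeff q i = coeff q 0" by (rule vanish_cyc[OF pr z1 z2 dq vq])
  have "\<not> {..<p} \<subseteq> (\<lambda>e. e mod p) ` Sp"
  proof
    assume "{..<p} \<subseteq> (\<lambda>e. e mod p) ` Sp"
    then have "card {..<p} \<le> card ((\<lambda>e. e mod p) ` Sp)" using fin by (intro card_mono) auto
    also have "\<dots> \<le> card Sp" using fin by (rule card_image_le)
    finally show False using cd by (simp add: Sp_def)
  qed
  then obtain s0 where s0: "s0 < p" "s0 \<notin> (\<lambda>e. e mod p) ` Sp" by auto
  then have emp: "{e\<in>Sp. e mod p = s0} = {}" by auto
  have "C s0 = 0" unfolding C_def by (simp only: emp sum.empty)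
  then have "coeff q s0 = 0" using s0 by (simp add: cq)
  then have "coeff q (e0 mod p) = 0" using all s0 p0 by (metis mod_less_divisor)
  moreover have "{e\<in>Sp. e mod p = e0 mod p} = {e0}" using no e0 by (auto simp: Sp_def)
  ultimately show False using e0 p0 by (simp add: cq C_def)
qed

lemma primes_prod_dvd:
  fixes N :: nat
  assumes "finite P" "\<forall>q\<in>P. prime q \<and> q dvd N"
  shows "\<Prod>P dvd N"
  using assms
proof (induction P rule: finite_induct)
  case empty then show ?case by simp
next
  case (insert q P)
  have IH: "\<Prod>P dvd N" using insert.IH insert.prems by blast
  have qp: "prime q" "q dvd N" using insert.prems by blast+
  have nd: "\<not> q dvd \<Prod>P"
  proof
    assume "q dvd \<Prod>P"
    then obtain r where r: "r \<in> P" "q dvd r"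
      using prime_dvd_prod_iff[OF insert.hyps(1) qp(1), of "\<lambda>x. x"] by blast
    have "prime r" using r(1) insert.prems by blast
    then have "q = r" using primes_dvd_imp_eq[OF qp(1) _ r(2)] by blast
    then show False using r(1) insert.hyps(2) by blast
  qed
  have "q * \<Prod>P dvd N" by (rule divides_mult[OF qp(2) IH prime_imp_coprime_nat[OF qp(1) nd]])
  then show ?case using insert.hyps by (simp add: prod.insert)
qed

lemma real_bound:
  assumes "T > 0" "D > 0" "real k \<ge> 2 * real T * ln (real D) / ln (2 * real T)"
  shows "D ^ (2 * T) \<le> (2 * T) ^ k"
proof -
  have l: "ln (2 * real T) > 0" using assms(1) by simp
  have h1: "2 * real T * ln (real D) \<le> real k * ln (2 * real T)"
    using assms(3) by (simp only: pos_divide_le_eq[OF l])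
  have e1: "ln ((real D) ^ (2 * T)) = real (2 * T) * ln (real D)"
    by (rule ln_realpow)
  have e2: "ln ((2 * real T) ^ k) = real k * ln (2 * real T)"
    by (rule ln_realpow)
  have e3: "real (2 * T) * ln (real D) = 2 * real T * ln (real D)" by simp
  have "ln ((real D) ^ (2 * T)) \<le> ln ((2 * real T) ^ k)"
    unfolding e1 e2 e3 by (rule h1)
  moreover have "(real D) ^ (2 * T) > 0" using assms(2) by simp
  moreover have "(2 * real T) ^ k > 0" using assms(1) by simp
  ultimately have "(real D) ^ (2 * T) \<le> (2 * real T) ^ k"
    using ln_le_cancel_iff by blast
  then have "real (D ^ (2 * T)) \<le> real ((2 * T) ^ k)" by simp
  then show ?thesis by (simp only: of_nat_le_iff)
qed

theorem corollary3:
  fixes T D E k :: nat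
    and p :: "nat \<Rightarrow> nat"
    and \<zeta> y \<epsilon> :: "nat \<Rightarrow> complex"
    and f g :: "rat poly"
  assumes "T > 0" and "D > 0" and "k > 0"
    and "real k \<ge> 2 * real T * ln (real D) / ln (2 * real T)"
    and "strict_mono_on {1..k + 2 * E} p"
    and "\<forall>i \<in> {1..k + 2 * E}. prime (p i)"
    and "2 * T < p 1"
    and "\<forall>i \<in> {1..k + 2 * E}. \<zeta> i ^ p i = 1 \<and> \<zeta> i \<noteq> 1"
    and "nterms f \<le> T" and "degree f \<le> D"
    and "\<forall>i \<in> {1..k + 2 * E}. y i = cval f (\<zeta> i) + \<epsilon> i"
    and "card {i \<in> {1..k + 2 * E}. \<epsilon> i \<noteq> 0} \<le> E"
    and "nterms g \<le> T" and "degree g \<le> D"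
    and "card {i \<in> {1..k + 2 * E}. cval g (\<zeta> i) = y i} \<ge> k + E"
  shows "g = f"
proof (rule ccontr)
  assume ne: "g \<noteq> f"
  define I where "I = {1..k + 2 * E}"
  define h where "h = g - f"
  have hnz: "h \<noteq> 0" using ne by (simp add: h_def)
  define Sh where "Sh = {i. coeff h i \<noteq> 0}"
  have fing: "finite {i. coeff g i \<noteq> 0}"
    by (rule finite_subset[of _ "{..degree g}"]) (auto intro: le_degree)
  have finf: "finite {i. coeff f i \<noteq> 0}"
    by (rule finite_subset[of _ "{..degree f}"]) (auto intro: le_degree)
  have Sh_sub: "Sh \<subseteq> {i. coeff g i \<noteq> 0} \<union> {i. coeff f i \<noteq> 0}"
    by (auto simp: h_def Sh_def)
  have finSh: "finite Sh" using Sh_sub fing finf finite_subset by blast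
  have cardSh: "card Sh \<le> 2 * T"
  proof -
    have "card Sh \<le> card ({i. coeff g i \<noteq> 0} \<union> {i. coeff f i \<noteq> 0})"
      using Sh_sub fing finf by (intro card_mono) auto
    also have "\<dots> \<le> card {i. coeff g i \<noteq> 0} + card {i. coeff f i \<noteq> 0}" by (rule card_Un_le)
    also have "\<dots> \<le> 2 * T" using assms(9,13) by (simp add: nterms_def)
    finally show ?thesis .
  qed
  have degh: "degree h \<le> D"
    using degree_diff_le_max[of g f] assms(10,14) by (simp add: h_def)
  have Sh_le: "e \<le> D" if "e \<in> Sh" for e
    using that le_degree degh by (fastforce simp: Sh_def)
  define e0 where "e0 = degree h"
  have e0Sh: "e0 \<in> Sh" using hnz by (simp add: Sh_def e0_def)
  have ce0: "coeff h e0 \<noteq> 0" using e0Sh by (simp add: Sh_def)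
  have pI: "p i > 2 * T" if "i \<in> I" for i
  proof (cases "i = 1")
    case True then show ?thesis using assms(7) by simp
  next
    case False
    with that have "1 < i" "1 \<in> I" using assms(3) by (auto simp: I_def)
    then have "p 1 < p i" using strict_mono_onD[OF assms(5), of 1 i] that unfolding I_def by auto
    then show ?thesis using assms(7) by simp
  qed
  define A where "A = {i \<in> I. cval g (\<zeta> i) = y i}"
  define B where "B = {i \<in> I. \<epsilon> i \<noteq> 0}"
  define S where "S = A - B"
  have finI: "finite I" by (simp add: I_def)
  have finS: "finite S" using finI by (simp add: S_def A_def)
  have cardS: "card S \<ge> k"
  proof -
    have "card A \<le> card (S \<union> B)" using finI by (intro card_mono) (auto simp: S_def A_def B_def)
    also have "\<dots> \<le> card S + card B" by (rule card_Un_le)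
    finally show ?thesis using assms(12,15) by (simp add: A_def B_def I_def)
  qed
  have SI: "S \<subseteq> I" by (auto simp: S_def A_def)
  have vanish: "cval h (\<zeta> i) = 0" if "i \<in> S" for i
  proof -
    have "i \<in> I" "cval g (\<zeta> i) = y i" "\<epsilon> i = 0" using that by (auto simp: S_def A_def B_def)
    then show ?thesis using assms(11) by (simp add: h_def cval_diff I_def)
  qed
  define dd where "dd e = (if e0 \<le> e then e - e0 else e0 - e)" for e
  define N where "N = (\<Prod>e\<in>Sh - {e0}. dd e)"
  have Npos: "N > 0" unfolding N_def using finSh by (intro prod_pos) (auto simp: dd_def)
  have pdvd: "p i dvd N" if iS: "i \<in> S" for i
  proof -
    have iI: "i \<in> I" using iS SI by blast
    have pr: "prime (p i)" using assms(6) iI by (simp add: I_def)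
    have z: "\<zeta> i ^ p i = 1" "\<zeta> i \<noteq> 1" using assms(8) iI by (auto simp: I_def)
    have cdh: "card {i. coeff h i \<noteq> 0} < p i" using cardSh pI[OF iI] by (simp add: Sh_def)
    obtain e where e: "coeff h e \<noteq> 0" "e \<noteq> e0" "e mod p i = e0 mod p i"
      using collision[OF pr z cdh vanish[OF iS] ce0] by blast
    have "p i dvd dd e"
      using e(3) by (auto simp: dd_def mod_eq_dvd_iff_nat[symmetric])
    also have "dd e dvd N" unfolding N_def using finSh e by (intro dvd_prodI) (auto simp: Sh_def)
    finally show ?thesis .
  qed
  have inj: "inj_on p S"
    using strict_mono_on_imp_inj_on[OF assms(5)] SI unfolding I_def by (rule inj_on_subset)
  have "(\<Prod>i\<in>S. p i) = \<Prod>(p ` S)" using inj by (simp add: prod.reindex)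
  also have "\<dots> dvd N"
    using finS pdvd assms(6) SI by (intro primes_prod_dvd) (auto simp: I_def)
  finally have "(\<Prod>i\<in>S. p i) \<le> N" using Npos by (rule dvd_imp_le)
  moreover have "N \<le> D ^ (2 * T)"
  proof -
    have "N \<le> (\<Prod>e\<in>Sh - {e0}. D)" unfolding N_def
      using Sh_le e0Sh by (intro prod_mono) (fastforce simp: dd_def intro: le_trans[OF diff_le_self])
    also have "\<dots> = D ^ card (Sh - {e0})" by simp
    also have "\<dots> \<le> D ^ (2 * T)"
      using assms(2) cardSh finSh by (intro power_increasing) (auto intro: le_trans[OF card_Diff1_le])
    finally show ?thesis .
  qed
  moreover have "(2 * T + 1) ^ k \<le> (\<Prod>i\<in>S. p i)"
  proof -
    have "(2 * T + 1) ^ k \<le> (2 * T + 1) ^ card S" using cardS by (intro power_increasing) auto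
    also have "\<dots> = (\<Prod>i\<in>S. 2 * T + 1)" by simp
    also have "\<dots> \<le> (\<Prod>i\<in>S. p i)" using pI SI by (intro prod_mono) (auto simp: Suc_le_eq)
    finally show ?thesis .
  qed
  moreover have "(2 * T) ^ k < (2 * T + 1) ^ k" using assms(3) by (intro power_strict_mono) auto
  moreover have "D ^ (2 * T) \<le> (2 * T) ^ k" using real_bound assms(1,2,4) by blast
  ultimately show False by linarith
qed

end
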